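(* Let $\mathcal X,\mathcal Y$ be compact convex sets and $\mathcal L:\mathcal X\times\mathcal Y\to\mathbb R$ a differentiable convex-concave function that is uniformly strongly convex-concave with constants $(\mu_{\mathcal X},\mu_{\mathcal Y})$, $\mu_{\mathcal X},\mu_{\mathcal Y}>0$. Let $(x_c,y_c)$ belong to the relative interior of $\mathcal X\times\mathcal Y$ and define $\delta_x:=\min_{s_x\in\partial\mathcal X}\|s_x-x_c\|>0$ and $\delta_y:=\min_{s_y\in\partial\mathcal Y}\|s_y-y_c\|$. Then $$\mu^{x_c}_{\mathcal L}\ge\mu_{\mathcal X}\delta_x^2\qquad\text{and}\qquad\mu^{y_c}_{\mathcal L}\ge\mu_{\mathcal Y}\delta_y^2.$$
   Context: $\partial$ denotes the relative boundary. Uniformly strongly convex-concave: $\mathcal L(\cdot,y)$ is $\mu_{\mathcal X}$-strongly convex for every $y$ and $-\mathcal L(x,\cdot)$ is $\mu_{\mathcal Y}$-strongly convex for every $x$ (w.r.t. the norms used to define $\delta_x,\delta_y$). Interior strong convexity of a convex differentiable $f$ on a convex set $\mathcal K$ w.r.t. a point $x_c$ in its relative interior: $\mu_f^{x_c}:=\inf\frac2{\gamma^2}(f(u)-f(x)-\langle u-x,\nabla f(x)\rangle)$ over $x\in\mathcal K\setminus\{x_c\}$, $\gamma\in(0,1]$, $u=x+\gamma(s-x)$, where $s$ is the point where the ray from $x$ through $x_c$ meets the relative boundary of $\mathcal K$. Then $\mu^{x_c}_{\mathcal L}:=\inf_{y\in\mathcal Y}\mu^{x_c}_{\mathcal L(\cdot,y)}$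 and $\mu^{y_c}_{\mathcal L}:=\inf_{x\in\mathcal X}\mu^{y_c}_{-\mathcal L(x,\cdot)}$. *)

theory Defs
  imports "HOL-Analysis.Analysis"
begin

definition strongly_convex_on :: "real \<Rightarrow> 'a::real_normed_vector set \<Rightarrow> ('a \<Rightarrow> real) \<Rightarrow> bool" where
  "strongly_convex_on \<mu> K f \<longleftrightarrow>
     (\<forall>x\<in>K. \<forall>y\<in>K. \<forall>t\<in>{0..1}.
        f ((1 - t) *\<^sub>R x + t *\<^sub>R y) \<le> (1 - t) * f x + t * f y - \<mu> / 2 * t * (1 - t) * (norm (x - y))\<^sup>2)"

text \<open>Admissible values in the definition of interior strong convexity of f on K w.r.t. xc:
  x in K minus xc, gamma in (0,1], s the point where the ray from x through xc meets
  the relative boundary of K (s = x + t (xc - x), t >= 1), u = x + gamma (s - x).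
  The linear term uses the Frechet derivative of f at x.\<close>
definition isc_values :: "'a::euclidean_space set \<Rightarrow> 'a \<Rightarrow> ('a \<Rightarrow> real) \<Rightarrow> real set" where
  "isc_values K xc f =
     {2 / \<gamma>\<^sup>2 * (f u - f x - frechet_derivative f (at x) (u - x)) | x \<gamma> t s u.
        x \<in> K - {xc} \<and> 0 < \<gamma> \<and> \<gamma> \<le> 1 \<and> 1 \<le> t \<and>
        s = x + t *\<^sub>R (xc - x) \<and> s \<in> rel_frontier K \<and> u = x + \<gamma> *\<^sub>R (s - x)}"

definition interior_sc :: "'a::euclidean_space set \<Rightarrow> 'a \<Rightarrow> ('a \<Rightarrow> real) \<Rightarrow> real" where
  "interior_sc K xc f = Inf (isc_values K xc f)"

definition interior_sc_L_x :: "'a::euclidean_space set \<Rightarrow> 'b set \<Rightarrow> 'a \<Rightarrow> ('a \<Rightarrow> 'b \<Rightarrow> real) \<Rightarrow> real" where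
  "interior_sc_L_x X Y xc L = Inf ((\<lambda>y. interior_sc X xc (\<lambda>x. L x y)) ` Y)"

definition interior_sc_L_y :: "'a set \<Rightarrow> 'b::euclidean_space set \<Rightarrow> 'b \<Rightarrow> ('a \<Rightarrow> 'b \<Rightarrow> real) \<Rightarrow> real" where
  "interior_sc_L_y X Y yc L = Inf ((\<lambda>x. interior_sc Y yc (\<lambda>y. - L x y)) ` X)"

definition dist_rel_bd :: "'a::euclidean_space set \<Rightarrow> 'a \<Rightarrow> real" where
  "dist_rel_bd K c = Inf ((\<lambda>s. norm (s - c)) ` rel_frontier K)"

end

theory Submission
  imports Defs
begin

lemma grad_ineq:
  fixes f :: "'a::euclidean_space \<Rightarrow> real"
  assumes sc: "strongly_convex_on \<mu> K f" and x: "x \<in> K" and u: "u \<in> K"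
    and d: "(f has_derivative D) (at x)"
  shows "D (u - x) \<le> f u - f x - \<mu> / 2 * (norm (u - x))\<^sup>2"
proof -
  define v where "v = u - x"
  have lin: "linear D" using d has_derivative_linear by blast
  have "((\<lambda>\<tau>. f (x + \<tau> *\<^sub>R v)) has_derivative (\<lambda>h. D (h *\<^sub>R v))) (at 0)"
  proof -
    have a: "((\<lambda>\<tau>. x + \<tau> *\<^sub>R v) has_derivative (\<lambda>h. h *\<^sub>R v)) (at (0::real))"
      by (auto intro!: derivative_eq_intros)
    have "(f has_derivative D) (at (x + 0 *\<^sub>R v))" using d by simp
    from diff_chain_at[OF a this] show ?thesis by (simp add: o_def)
  qed
  hence "((\<lambda>\<tau>. f (x + \<tau> *\<^sub>R v)) has_real_derivative D v) (at 0)"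
    using lin by (simp add: has_field_derivative_def linear_cmul mult.commute[of _ "D v"])
  hence "((\<lambda>h. (f (x + h *\<^sub>R v) - f x) / h) \<longlongrightarrow> D v) (at 0)"
    unfolding DERIV_def by simp
  hence L1: "((\<lambda>h. (f (x + h *\<^sub>R v) - f x) / h) \<longlongrightarrow> D v) (at_right 0)"
    by (auto intro: tendsto_mono[OF at_le])
  have L2: "((\<lambda>h. f u - f x - \<mu> / 2 * (1 - h) * (norm v)\<^sup>2) \<longlongrightarrow> f u - f x - \<mu> / 2 * (1 - 0) * (norm v)\<^sup>2) (at_right 0)"
    by (intro tendsto_intros)
  have ev: "\<forall>\<^sub>F h in at_right 0. (f (x + h *\<^sub>R v) - f x) / h \<le> f u - f x - \<mu> / 2 * (1 - h) * (norm v)\<^sup>2"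
  proof -
    have "\<forall>\<^sub>F h in at_right (0::real). h \<in> {0<..<1}" by (rule eventually_at_right_real) simp
    then show ?thesis
    proof eventually_elim
      case (elim h)
      have "f ((1 - h) *\<^sub>R x + h *\<^sub>R u) \<le> (1 - h) * f x + h * f u - \<mu> / 2 * h * (1 - h) * (norm (x - u))\<^sup>2"
        using sc x u elim unfolding strongly_convex_on_def by auto
      moreover have "(1 - h) *\<^sub>R x + h *\<^sub>R u = x + h *\<^sub>R v" by (simp add: v_def algebra_simps)
      moreover have "norm (x - u) = norm v" by (simp add: v_def norm_minus_commute)
      ultimately have "f (x + h *\<^sub>R v) - f x \<le> h * (f u - f x - \<mu> / 2 * (1 - h) * (norm v)\<^sup>2)"
        by (simp add: algebra_simps)
      thus ?case using elim by (simp add: divide_le_eq mult.commute)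
    qed
  qed
  have "D v \<le> f u - f x - \<mu> / 2 * (1 - 0) * (norm v)\<^sup>2"
    using tendsto_le[OF trivial_limit_at_right_real L2 L1 ev] .
  thus ?thesis by (simp add: v_def)
qed

lemma isc_bound:
  fixes f :: "'a::euclidean_space \<Rightarrow> real" and K :: "'a set"
  assumes cK: "closed K" "convex K" and sc: "strongly_convex_on \<mu> K f" and mu: "\<mu> > 0"
    and diff: "\<forall>x\<in>K. f differentiable (at x)"
    and xc: "xc \<in> rel_interior K" and fr: "rel_frontier K \<noteq> {}"
  shows "interior_sc K xc f \<ge> \<mu> * (dist_rel_bd K xc)\<^sup>2"
proof -
  define \<delta> where "\<delta> = dist_rel_bd K xc"
  have frK: "rel_frontier K \<subseteq> K" using cK by (simp add: rel_frontier_def closure_closed)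
  have d0: "\<delta> \<ge> 0" unfolding \<delta>_def dist_rel_bd_def
    using fr by (intro cInf_greatest) auto
  have dle: "\<delta> \<le> norm (s - xc)" if "s \<in> rel_frontier K" for s
    unfolding \<delta>_def dist_rel_bd_def
    by (rule cInf_lower) (use that in \<open>auto intro: bdd_belowI[of _ 0]\<close>)
  have ne: "isc_values K xc f \<noteq> {}"
  proof -
    obtain s where s: "s \<in> rel_frontier K" using fr by auto
    have sK: "s \<in> K" using s frK by auto
    have Kne: "K \<noteq> {}" using sK by auto
    have sxc: "s \<noteq> xc" using s xc by (auto simp add: rel_frontier_def)
    obtain e where e: "e > 1" "(1 - e) *\<^sub>R s + e *\<^sub>R xc \<in> K"
      using convex_rel_interior_iff[OF cK(2) Kne] xc sK by blast
    define x where "x = (1 - e) *\<^sub>R s + e *\<^sub>R xc"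
    define t where "t = e / (e - 1)"
    have xK: "x \<in> K" using e(2) by (simp add: x_def)
    have A: "x \<noteq> xc"
    proof
      assume "x = xc"
      hence "(1 - e) *\<^sub>R (s - xc) = 0" unfolding x_def by (simp add: algebra_simps)
      thus False using e sxc by simp
    qed
    have B: "1 \<le> t" using e by (simp add: t_def)
    have C: "s = x + t *\<^sub>R (xc - x)"
    proof -
      have "xc - x = (e - 1) *\<^sub>R (s - xc)" by (simp add: x_def algebra_simps)
      hence "t *\<^sub>R (xc - x) = e *\<^sub>R (s - xc)" using e by (simp add: t_def)
      thus ?thesis by (simp add: x_def algebra_simps)
    qed
    have "2 / 1\<^sup>2 * (f (x + 1 *\<^sub>R (s - x)) - f x - frechet_derivative f (at x) (x + 1 *\<^sub>R (s - x) - x)) \<in> isc_values K xc f"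
      unfolding isc_values_def mem_Collect_eq
      apply (rule exI[where x=x], rule exI[where x=1], rule exI[where x=t], rule exI[where x=s], rule exI[where x="x + 1 *\<^sub>R (s - x)"])
      using A B C s xK by (intro conjI refl) simp_all
    thus ?thesis by blast
  qed
  have "\<mu> * \<delta>\<^sup>2 \<le> interior_sc K xc f"
    unfolding interior_sc_def
  proof (rule cInf_greatest[OF ne])
    fix r assume "r \<in> isc_values K xc f"
    then obtain x \<gamma> t s u where H: "r = 2 / \<gamma>\<^sup>2 * (f u - f x - frechet_derivative f (at x) (u - x))"
      "x \<in> K - {xc}" "0 < \<gamma>" "\<gamma> \<le> 1" "1 \<le> t"
      "s = x + t *\<^sub>R (xc - x)" "s \<in> rel_frontier K" "u = x + \<gamma> *\<^sub>R (s - x)"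
      unfolding isc_values_def by blast
    have xK: "x \<in> K" using H by auto
    have sK: "s \<in> K" using H frK by auto
    have uK: "u \<in> K"
    proof -
      have "u = (1 - \<gamma>) *\<^sub>R x + \<gamma> *\<^sub>R s" using H by (simp add: algebra_simps)
      thus ?thesis using convexD[OF cK(2) xK sK, of "1 - \<gamma>" \<gamma>] H by auto
    qed
    have D: "(f has_derivative frechet_derivative f (at x)) (at x)"
      using diff xK frechet_derivative_works by blast
    have g: "frechet_derivative f (at x) (u - x) \<le> f u - f x - \<mu> / 2 * (norm (u - x))\<^sup>2"
      by (rule grad_ineq[OF sc xK uK D])
    have nu: "norm (u - x) = \<gamma> * norm (s - x)" using H by simp
    have "norm (s - xc) = (t - 1) * norm (xc - x)"
    proof -
      have "s - xc = (t - 1) *\<^sub>R (xc - x)" using H by (simp add: algebra_simps)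
      thus ?thesis using H by simp
    qed
    moreover have "norm (s - x) = t * norm (xc - x)" using H by simp
    ultimately have "norm (s - xc) \<le> norm (s - x)"
      by (smt (verit) norm_ge_zero mult_nonneg_nonneg left_diff_distrib)
    hence ds: "\<delta> \<le> norm (s - x)" using dle[OF H(7)] by linarith
    have "\<delta>\<^sup>2 \<le> (norm (s - x))\<^sup>2" using ds d0 by (simp add: power_mono)
    hence "\<mu> * \<delta>\<^sup>2 \<le> \<mu> * (norm (s - x))\<^sup>2" using mu by simp
    also have "\<mu> * (norm (s - x))\<^sup>2 = 2 / \<gamma>\<^sup>2 * (\<mu> / 2 * (norm (u - x))\<^sup>2)"
      using H(3) nu by (simp add: field_simps power_mult_distrib)
    also have "\<dots> \<le> r" unfolding H(1) using g H(3)
      by (intro mult_left_mono) auto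
    finally show "\<mu> * \<delta>\<^sup>2 \<le> r" .
  qed
  thus ?thesis by (simp add: \<delta>_def)
qed

theorem proposition12:
  fixes X :: "'a::euclidean_space set" and Y :: "'b::euclidean_space set"
    and L :: "'a \<Rightarrow> 'b \<Rightarrow> real"
    and \<mu>X \<mu>Y :: real and xc :: 'a and yc :: 'b
  assumes "compact X" "convex X" "compact Y" "convex Y"
    and "\<forall>x\<in>X. \<forall>y\<in>Y. (\<lambda>p. L (fst p) (snd p)) differentiable (at (x, y))"
    and "\<forall>y\<in>Y. convex_on X (\<lambda>x. L x y)"
    and "\<forall>x\<in>X. concave_on Y (\<lambda>y. L x y)"
    and "\<mu>X > 0" "\<mu>Y > 0"
    and "\<forall>y\<in>Y. strongly_convex_on \<mu>X X (\<lambda>x. L x y)"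
    and "\<forall>x\<in>X. strongly_convex_on \<mu>Y Y (\<lambda>y. - L x y)"
    and "(xc, yc) \<in> rel_interior (X \<times> Y)"
    and "rel_frontier X \<noteq> {}" "rel_frontier Y \<noteq> {}"
  shows "interior_sc_L_x X Y xc L \<ge> \<mu>X * (dist_rel_bd X xc)\<^sup>2
       \<and> interior_sc_L_y X Y yc L \<ge> \<mu>Y * (dist_rel_bd Y yc)\<^sup>2"
proof -
  have ri: "xc \<in> rel_interior X" "yc \<in> rel_interior Y"
    using assms(12) rel_interior_Times[OF assms(2,4)] by auto
  have XY: "xc \<in> X" "yc \<in> Y" using ri rel_interior_subset by auto
  have dx: "(\<lambda>x. L x y) differentiable (at x)" if "x \<in> X" "y \<in> Y" for x y
  proof -
    have a: "(\<lambda>x. (x, y)) differentiable (at x)" by (auto intro!: derivative_eq_intros simp: differentiable_def)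
    have "(\<lambda>p. L (fst p) (snd p)) differentiable (at ((\<lambda>x. (x, y)) x))" using assms(5) that by simp
    from differentiable_chain_at[OF a this] show ?thesis by (simp add: o_def)
  qed
  have dy: "(\<lambda>y. - L x y) differentiable (at y)" if "x \<in> X" "y \<in> Y" for x y
  proof -
    have a: "(\<lambda>y. (x, y)) differentiable (at y)" by (auto intro!: derivative_eq_intros simp: differentiable_def)
    have "(\<lambda>p. L (fst p) (snd p)) differentiable (at ((\<lambda>y. (x, y)) y))" using assms(5) that by simp
    from differentiable_chain_at[OF a this] have "(\<lambda>y. L x y) differentiable (at y)" by (simp add: o_def)
    thus ?thesis by (rule differentiable_minus)
  qed
  have "\<mu>X * (dist_rel_bd X xc)\<^sup>2 \<le> interior_sc_L_x X Y xc L"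
    unfolding interior_sc_L_x_def
    using XY assms(10) by (intro cInf_greatest) (auto intro!: isc_bound compact_imp_closed assms dx ri)
  moreover have "\<mu>Y * (dist_rel_bd Y yc)\<^sup>2 \<le> interior_sc_L_y X Y yc L"
    unfolding interior_sc_L_y_def
    using XY assms(11) by (intro cInf_greatest) (auto intro!: isc_bound compact_imp_closed assms dy ri)
  ultimately show ?thesis by simp
qed

end
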